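(* Fix $0<a<2$. For every $p\in\mathbb N$ with $p<(4/a)-1$ and every $0<r<\infty$, $$W(p,r):=\int_{\mathbb B(0,r)^p}f(z_1,\dots,z_p)\,dz_1\cdots dz_p<\infty,$$ where $f(w_1,\dots,w_q)=\prod_{j=1}^q\|w_j\|^{-a}\prod_{1\le j<k\le q}\|w_j-w_k\|^{-a}$.
   Context: Here $w_j,z_j\in\mathbb R^2$, $\|(t,x)\|=|t|+|x|$ on $\mathbb R^2$, $\mathbb B(0,r)=\{w\in\mathbb R^2:\|w\|<r\}$, and $\mathbb B(0,r)^p\subset\mathbb R^{2p}$ with Lebesgue measure. *)

theory Defs
  imports "HOL-Analysis.Analysis"
begin

definition l1n :: "real \<times> real \<Rightarrow> real" where
  "l1n w = \<bar>fst w\<bar> + \<bar>snd w\<bar>"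

definition l1ball :: "real \<Rightarrow> (real \<times> real) set" where
  "l1ball r = {w. l1n w < r}"

definition fker :: "real \<Rightarrow> nat \<Rightarrow> (nat \<Rightarrow> real \<times> real) \<Rightarrow> real" where
  "fker a q w = (\<Prod>j<q. l1n (w j) powr (-a)) *
                 (\<Prod>j<q. \<Prod>k\<in>{j<..<q}. l1n (w j - w k) powr (-a))"

end

theory Submission
  imports Defs
begin

lemma prod_swap_tri:
  "(\<Prod>i<(p::nat). \<Prod>j<i. h i j) = (\<Prod>j<p. \<Prod>i\<in>{j<..<p}. (h i j::real))"
proof (induction p)
  case 0 then show ?case by simp
next
  case (Suc p)
  have e: "{j<..<Suc p} = insert p {j<..<p}" if "j < p" for j using that by auto
  have "{p<..<Suc p} = {}" by auto
  hence "(\<Prod>j<Suc p. \<Prod>i\<in>{j<..<Suc p}. h i j) = (\<Prod>j<p. \<Prod>i\<in>{j<..<Suc p}. h i j)"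
    by simp
  also have "\<dots> = (\<Prod>j<p. h p j * (\<Prod>i\<in>{j<..<p}. h i j))"
    by (rule prod.cong) (auto simp: e)
  also have "\<dots> = (\<Prod>j<p. h p j) * (\<Prod>j<p. \<Prod>i\<in>{j<..<p}. h i j)"
    by (simp add: prod.distrib)
  finally show ?case using Suc by (simp add: mult.commute)
qed

lemma core_ineq:
  fixes d :: "nat \<Rightarrow> real" and h :: "nat \<Rightarrow> nat \<Rightarrow> real" and p :: nat
  assumes d0: "\<And>j. 0 \<le> d j" and h0: "\<And>j k. 0 \<le> h j k" and hs: "\<And>j k. h j k = h k j"
  defines "c \<equiv> (real p + 1) / 2"
  shows "(\<Prod>j<p. d j) * (\<Prod>j<p. \<Prod>k\<in>{j<..<p}. h j k)
     \<le> (\<Prod>j<p. d j) powr c + (\<Sum>i<p. (d i * (\<Prod>j\<in>{..<p}-{i}. h i j)) powr c)"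
proof (rule ccontr)
  define A where "A = (\<Prod>j<p. d j)"
  define B where "B = (\<Prod>j<p. \<Prod>k\<in>{j<..<p}. h j k)"
  define F where "F = A * B"
  define S where "S = A powr c + (\<Sum>i<p. (d i * (\<Prod>j\<in>{..<p}-{i}. h i j)) powr c)"
  assume "\<not> ?thesis"
  hence FS: "S < F" unfolding F_def S_def A_def B_def by simp
  have S0: "0 \<le> S" unfolding S_def by (intro add_nonneg_nonneg sum_nonneg) auto
  have F0: "0 < F" using FS S0 by linarith
  have Q: "(\<Prod>i<p. \<Prod>j\<in>{..<p}-{i}. h i j) = B * B"
  proof -
    have "(\<Prod>i<p. \<Prod>j\<in>{..<p}-{i}. h i j) = (\<Prod>i<p. (\<Prod>j<i. h i j) * (\<Prod>j\<in>{i<..<p}. h i j))"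
    proof (rule prod.cong)
      fix i assume "i \<in> {..<p}"
      hence "{..<p}-{i} = {..<i} \<union> {i<..<p}" by auto
      moreover have "(\<Prod>j\<in>{..<i} \<union> {i<..<p}. h i j) = (\<Prod>j<i. h i j) * (\<Prod>j\<in>{i<..<p}. h i j)"
        by (rule prod.union_disjoint) auto
      ultimately show "(\<Prod>j\<in>{..<p}-{i}. h i j) = (\<Prod>j<i. h i j) * (\<Prod>j\<in>{i<..<p}. h i j)"
        by simp
    qed simp
    also have "\<dots> = (\<Prod>i<p. \<Prod>j<i. h i j) * B" unfolding B_def by (simp add: prod.distrib)
    also have "(\<Prod>i<p. \<Prod>j<i. h i j) = B" unfolding B_def prod_swap_tri
      by (intro prod.cong refl) (simp add: hs)
    finally show ?thesis .
  qed
  have P: "(\<Prod>i<p. d i * (\<Prod>j\<in>{..<p}-{i}. h i j)) = A * (B * B)"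
    unfolding A_def by (simp add: prod.distrib Q)
  have "A powr c * (\<Prod>i<p. (d i * (\<Prod>j\<in>{..<p}-{i}. h i j)) powr c)
        = (A * (A * (B*B))) powr c"
    unfolding prod_powr_distrib[symmetric] P powr_mult[symmetric] ..
  also have "\<dots> = (F * F) powr c" unfolding F_def by (simp add: algebra_simps)
  also have "\<dots> = F powr (real (Suc p))" using F0
  proof -
    have "(F * F) powr c = (F powr 2) powr c" using F0 by (simp add: power2_eq_square)
    also have "\<dots> = F powr (2 * c)" by (simp add: powr_powr)
    also have "2 * c = real (Suc p)" unfolding c_def by simp
    finally show ?thesis .
  qed
  also have "\<dots> = F ^ Suc p" using F0 by (rule powr_realpow)
  finally have E: "A powr c * (\<Prod>i<p. (d i * (\<Prod>j\<in>{..<p}-{i}. h i j)) powr c) = F ^ Suc p" .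
  have "A powr c * (\<Prod>i<p. (d i * (\<Prod>j\<in>{..<p}-{i}. h i j)) powr c) \<le> S * (\<Prod>i<p. S)"
  proof (rule mult_mono)
    show "A powr c \<le> S" unfolding S_def by (simp add: sum_nonneg)
    show "(\<Prod>i<p. (d i * (\<Prod>j\<in>{..<p}-{i}. h i j)) powr c) \<le> (\<Prod>i<p. S)"
    proof (rule prod_mono)
      fix i assume i: "i \<in> {..<p}"
      have "(d i * (\<Prod>j\<in>{..<p}-{i}. h i j)) powr c \<le> (\<Sum>i<p. (d i * (\<Prod>j\<in>{..<p}-{i}. h i j)) powr c)"
        by (rule member_le_sum[OF i]) auto
      thus "0 \<le> (d i * (\<Prod>j\<in>{..<p}-{i}. h i j)) powr c \<and> (d i * (\<Prod>j\<in>{..<p}-{i}. h i j)) powr c \<le> S"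
        unfolding S_def using powr_ge_zero[of A c] powr_ge_zero[of "d i * (\<Prod>j\<in>{..<p}-{i}. h i j)" c] by linarith
    qed
  qed (auto simp: S0 prod_nonneg)
  also have "\<dots> = S ^ Suc p" by simp
  also have "\<dots> < F ^ Suc p" using S0 FS by (intro power_strict_mono) auto
  finally show False using E by simp
qed


lemma l1n_meas[measurable]: "l1n \<in> borel_measurable borel"
proof -
  have "continuous_on UNIV l1n" unfolding l1n_def[abs_def] by (intro continuous_intros)
  thus ?thesis by (rule borel_measurable_continuous_onI)
qed

lemma l1ball_meas[measurable]: "l1ball R \<in> sets borel"
  unfolding l1ball_def by measurable

lemma int1d:
  assumes c: "0 \<le> c" "c < 1" and R: "0 \<le> R"
  shows "(\<integral>\<^sup>+ s. ennreal (indicator {-R..R} s * \<bar>s\<bar> powr (-c)) \<partial>lborel) < \<infinity>"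
proof -
  define I where "I = R powr (-c + 1) / (-c + 1)"
  have h0: "((\<lambda>x. x powr (-c)) has_integral I) {0..R}"
    unfolding I_def by (rule has_integral_powr_from_0) (use c R in auto)
  have h1: "((\<lambda>x. \<bar>x\<bar> powr (-c)) has_integral I) {0..R}"
    by (rule has_integral_cong[THEN iffD1, OF _ h0]) auto
  have h2: "((\<lambda>x. \<bar>x\<bar> powr (-c)) has_integral I) {-R..0}"
    using h1 has_integral_reflect_real[of "\<lambda>x. \<bar>x\<bar> powr (-c)" I R 0] by simp
  have e1: "(\<integral>\<^sup>+ s. ennreal (indicator {0..R} s * \<bar>s\<bar> powr (-c)) \<partial>lborel) = ennreal I"
    by (rule nn_integral_has_integral_lebesgue[OF _ h1]) auto
  have e2: "(\<integral>\<^sup>+ s. ennreal (indicator {-R..0} s * \<bar>s\<bar> powr (-c)) \<partial>lborel) = ennreal I"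
    by (rule nn_integral_has_integral_lebesgue[OF _ h2]) auto
  have "(\<integral>\<^sup>+ s. ennreal (indicator {-R..R} s * \<bar>s\<bar> powr (-c)) \<partial>lborel)
     \<le> (\<integral>\<^sup>+ s. ennreal (indicator {0..R} s * \<bar>s\<bar> powr (-c)) + ennreal (indicator {-R..0} s * \<bar>s\<bar> powr (-c)) \<partial>lborel)"
    by (intro nn_integral_mono) (auto simp: indicator_def simp flip: ennreal_plus)
  also have "\<dots> = ennreal I + ennreal I"
    by (subst nn_integral_add) (auto simp: e1 e2)
  finally show ?thesis by (simp add: le_less_trans)
qed

lemma pt2d:
  fixes s t b :: real
  assumes b: "0 \<le> b" and s: "s \<noteq> 0" and t: "t \<noteq> 0"
  shows "(\<bar>s\<bar> + \<bar>t\<bar>) powr (-b) \<le> \<bar>s\<bar> powr (-b/2) * \<bar>t\<bar> powr (-b/2)"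
proof -
  have "(\<bar>s\<bar> + \<bar>t\<bar>) powr (-b) = ((\<bar>s\<bar> + \<bar>t\<bar>) powr (2::real)) powr (-b/2)"
    unfolding powr_powr by simp
  also have "(\<bar>s\<bar> + \<bar>t\<bar>) powr (2::real) = (\<bar>s\<bar> + \<bar>t\<bar>)^2"
    by simp
  also have "((\<bar>s\<bar> + \<bar>t\<bar>)^2) powr (-b/2) \<le> (\<bar>s\<bar> * \<bar>t\<bar>) powr (-b/2)"
  proof (rule powr_mono2')
    show "-b/2 \<le> 0" using b by simp
    show "0 < \<bar>s\<bar> * \<bar>t\<bar>" using s t by simp
    show "\<bar>s\<bar> * \<bar>t\<bar> \<le> (\<bar>s\<bar> + \<bar>t\<bar>)^2"
      by (simp add: power2_eq_square algebra_simps add_nonneg_nonneg)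
  qed
  also have "\<dots> = \<bar>s\<bar> powr (-b/2) * \<bar>t\<bar> powr (-b/2)" by (rule powr_mult)
  finally show ?thesis .
qed

lemma int2d:
  assumes b: "0 \<le> b" "b < 2" and R: "0 < R"
  shows "(\<integral>\<^sup>+ v. ennreal (indicator (l1ball R) v * l1n v powr (-b)) \<partial>(lborel::(real\<times>real) measure)) < \<infinity>"
proof -
  define \<phi> where "\<phi> s = ennreal (indicator {-R..R} s * \<bar>s\<bar> powr (-b/2))" for s :: real
  interpret pst: pair_sigma_finite "lborel::real measure" "lborel::real measure" ..
  have m: "(\<lambda>v. ennreal (indicator (l1ball R) v * l1n v powr (-b))) \<in> borel_measurable (lborel \<Otimes>\<^sub>M lborel :: (real\<times>real) measure)"
    unfolding lborel_prod by measurable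
  have [measurable]: "\<phi> \<in> borel_measurable borel" unfolding \<phi>_def by measurable
  have fin: "(\<integral>\<^sup>+ s. \<phi> s \<partial>lborel) < \<infinity>" unfolding \<phi>_def
    using int1d[of "b/2" R] b R by simp
  have pt: "ennreal (indicator (l1ball R) (s,t) * l1n (s,t) powr (-b)) \<le> \<phi> s * \<phi> t"
    if "s \<noteq> 0" "t \<noteq> 0" for s t
  proof (cases "(s,t) \<in> l1ball R")
    case True
    hence st: "\<bar>s\<bar> \<le> R" "\<bar>t\<bar> \<le> R" by (auto simp: l1ball_def l1n_def)
    have "l1n (s,t) powr (-b) \<le> \<bar>s\<bar> powr (-b/2) * \<bar>t\<bar> powr (-b/2)"
      unfolding l1n_def using pt2d[OF b(1) that] by simp
    thus ?thesis using True st unfolding \<phi>_def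
      by (simp add: indicator_def ennreal_mult'[symmetric] abs_le_iff)
  qed (simp add: indicator_def)
  have "(\<integral>\<^sup>+ v. ennreal (indicator (l1ball R) v * l1n v powr (-b)) \<partial>(lborel::(real\<times>real) measure))
      = (\<integral>\<^sup>+ v. ennreal (indicator (l1ball R) v * l1n v powr (-b)) \<partial>(lborel \<Otimes>\<^sub>M lborel))"
    by (simp only: lborel_prod)
  also have "\<dots> = (\<integral>\<^sup>+ s. \<integral>\<^sup>+ t. ennreal (indicator (l1ball R) (s,t) * l1n (s,t) powr (-b)) \<partial>lborel \<partial>lborel)"
    using lborel.nn_integral_fst[where f="\<lambda>v. ennreal (indicator (l1ball R) v * l1n v powr (-b))" and ?M1.0="lborel::real measure", OF m] by simp
  also have "\<dots> \<le> (\<integral>\<^sup>+ s. \<integral>\<^sup>+ t. \<phi> s * \<phi> t \<partial>lborel \<partial>lborel)"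
  proof (rule nn_integral_mono_AE)
    show "AE s in lborel. (\<integral>\<^sup>+ t. ennreal (indicator (l1ball R) (s,t) * l1n (s,t) powr (-b)) \<partial>lborel)
       \<le> (\<integral>\<^sup>+ t. \<phi> s * \<phi> t \<partial>lborel)"
      using AE_lborel_singleton[of "0::real"]
    proof eventually_elim
      case (elim s)
      show ?case
        by (rule nn_integral_mono_AE) (use AE_lborel_singleton[of "0::real"] pt elim in \<open>auto elim!: AE_mp\<close>)
    qed
  qed
  also have "\<dots> = (\<integral>\<^sup>+ s. \<phi> s * (\<integral>\<^sup>+ t. \<phi> t \<partial>lborel) \<partial>lborel)"
    by (simp add: nn_integral_cmult)
  also have "\<dots> = (\<integral>\<^sup>+ s. \<phi> s \<partial>lborel) * (\<integral>\<^sup>+ t. \<phi> t \<partial>lborel)"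
    by (simp add: nn_integral_multc)
  also have "\<dots> < \<infinity>" using fin by (simp add: ennreal_mult_less_top)
  finally show ?thesis .
qed

lemma l1n_minus: "l1n (- v) = l1n v" by (simp add: l1n_def)

lemma l1n_triangle: "l1n (x + y) \<le> l1n x + l1n y"
  by (simp add: l1n_def abs_triangle_ineq add_mono)

lemma int_translate:
  assumes x: "x \<in> l1ball r"
  shows "(\<integral>\<^sup>+ u. ennreal (indicator (l1ball r) u * l1n (x - u) powr (-b)) \<partial>lborel)
    \<le> (\<integral>\<^sup>+ v. ennreal (indicator (l1ball (2*r)) v * l1n v powr (-b)) \<partial>(lborel::(real\<times>real) measure))"
proof -
  have "(\<integral>\<^sup>+ u. ennreal (indicator (l1ball r) u * l1n (x - u) powr (-b)) \<partial>lborel)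
     = (\<integral>\<^sup>+ u. ennreal (indicator (l1ball r) u * l1n (x - u) powr (-b)) \<partial>(distr lborel borel ((+) x)))"
    by (simp only: lborel_distr_plus)
  also have "\<dots> = (\<integral>\<^sup>+ v. ennreal (indicator (l1ball r) (x + v) * l1n (x - (x + v)) powr (-b)) \<partial>lborel)"
    by (subst nn_integral_distr) auto
  also have "\<dots> \<le> (\<integral>\<^sup>+ v. ennreal (indicator (l1ball (2*r)) v * l1n v powr (-b)) \<partial>lborel)"
  proof (rule nn_integral_mono)
    fix v :: "real \<times> real"
    show "ennreal (indicator (l1ball r) (x + v) * l1n (x - (x + v)) powr (-b))
       \<le> ennreal (indicator (l1ball (2*r)) v * l1n v powr (-b))"
    proof (cases "x + v \<in> l1ball r")
      case True
      have "l1n v \<le> l1n (x + v) + l1n (- x)"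
        using l1n_triangle[of "x + v" "- x"] by simp
      hence "v \<in> l1ball (2*r)" using True x by (auto simp: l1ball_def l1n_minus)
      thus ?thesis using True by (simp add: l1n_minus)
    qed simp
  qed
  finally show ?thesis .
qed


theorem lemma6p12:
  fixes a r :: real and p :: nat
  assumes "0 < a" and "a < 2" and "real p < 4 / a - 1" and "0 < r"
  shows "(\<integral>\<^sup>+ z \<in> (PiE {..<p} (\<lambda>_. l1ball r)). ennreal (fker a p z)
            \<partial>(PiM {..<p} (\<lambda>_. (lborel :: (real \<times> real) measure)))) < \<infinity>"
proof -
  define B where "B = l1ball r"
  define c where "c = (real p + 1) / 2"
  define b where "b = a * c"
  have b0: "0 \<le> b" using assms(1) unfolding b_def c_def by simp
  have b2: "b < 2"
  proof -
    have "(real p + 1) * a < 4" using assms(1,3) by (simp add: field_simps)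
    thus ?thesis unfolding b_def c_def by (simp add: field_simps)
  qed
  interpret ps: product_sigma_finite "\<lambda>_::nat. lborel :: (real\<times>real) measure"
    unfolding product_sigma_finite_def by (simp add: lborel.sigma_finite_measure_axioms)
  define e where "e x = ennreal (indicator B x * l1n x powr (-b))" for x :: "real \<times> real"
  define G where "G x u = ennreal (indicator B u * l1n (x - u) powr (-b))" for x u :: "real \<times> real"
  define TO where "TO z = (\<Prod>j<p. e (z j))" for z :: "nat \<Rightarrow> real \<times> real"
  define T where "T i z = e (z i) * (\<Prod>j\<in>{..<p}-{i}. G (z i) (z j))" for i and z :: "nat \<Rightarrow> real \<times> real"
  have Bm[measurable]: "B \<in> sets borel" unfolding B_def by measurable
  have em[measurable]: "e \<in> borel_measurable borel" unfolding e_def by measurable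
  have dm[measurable]: "(\<lambda>w::(real\<times>real)\<times>(real\<times>real). fst w - snd w) \<in> borel_measurable borel"
    by (rule borel_measurable_continuous_onI) (intro continuous_intros)
  have sm[measurable]: "(\<lambda>w::(real\<times>real)\<times>(real\<times>real). snd w) \<in> borel_measurable borel"
    by (rule borel_measurable_continuous_onI) (intro continuous_intros)
  have Gm[measurable]: "(\<lambda>w. G (fst w) (snd w)) \<in> borel_measurable borel" unfolding G_def by measurable
  define K where "K = (\<integral>\<^sup>+ v. ennreal (indicator (l1ball (2*r)) v * l1n v powr (-b)) \<partial>(lborel::(real\<times>real) measure))"
  have K: "K < \<infinity>" unfolding K_def by (rule int2d) (use b0 b2 assms(4) in auto)
  define E where "E = (\<integral>\<^sup>+ v. e v \<partial>lborel)"
  have E: "E < \<infinity>" unfolding E_def e_def B_def by (rule int2d) (use b0 b2 assms(4) in auto)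
  have Gm2: "(\<lambda>w. G (fst w) (snd w)) \<in> borel_measurable (borel \<Otimes>\<^sub>M borel)"
    unfolding borel_prod by (rule Gm)
  have Gm3[measurable (raw)]: "(\<lambda>x. G (f x) (g x)) \<in> borel_measurable N"
    if "f \<in> N \<rightarrow>\<^sub>M borel" "g \<in> N \<rightarrow>\<^sub>M borel" for f g and N :: "(nat \<Rightarrow> real \<times> real) measure"
    using measurable_compose[OF measurable_Pair[OF that] Gm2] by simp
  have TOm[measurable]: "TO \<in> borel_measurable (PiM {..<p} (\<lambda>_. lborel))" unfolding TO_def by measurable
  have Tm[measurable]: "T i \<in> borel_measurable (PiM {..<p} (\<lambda>_. lborel))" if "i < p" for i
  proof -
    have ii: "i \<in> {..<p}" using that by simp
    have "(\<lambda>x. \<Prod>j\<in>{..<p}-{i}. G (x i) (x j)) \<in> borel_measurable (PiM {..<p} (\<lambda>_. lborel))"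
    proof (rule borel_measurable_prod_ennreal[where f="\<lambda>j x. G (x i) (x j)"])
      fix j assume "j \<in> {..<p}-{i}"
      hence jj: "j \<in> {..<p}" by simp
      show "(\<lambda>x. G (x i) (x j)) \<in> borel_measurable (PiM {..<p} (\<lambda>_. lborel))"
      proof (rule Gm3)
        show "(\<lambda>x. x i) \<in> PiM {..<p} (\<lambda>_. lborel) \<rightarrow>\<^sub>M borel" using ii by measurable
        show "(\<lambda>x. x j) \<in> PiM {..<p} (\<lambda>_. lborel) \<rightarrow>\<^sub>M borel" using jj by measurable
      qed
    qed
    moreover have "(\<lambda>x. e (x i)) \<in> borel_measurable (PiM {..<p} (\<lambda>_. lborel))"
      using ii by measurable
    ultimately show ?thesis unfolding T_def by measurable
  qed
  have pw: "ennreal (fker a p z) * indicator (PiE {..<p} (\<lambda>_. l1ball r)) z \<le> TO z + (\<Sum>i<p. T i z)" for z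
  proof (cases "z \<in> PiE {..<p} (\<lambda>_. l1ball r)")
    case False thus ?thesis by simp
  next
    case True
    hence zB: "\<And>j. j < p \<Longrightarrow> z j \<in> B" unfolding B_def by auto
    define d where "d j = l1n (z j) powr (-a)" for j
    define h where "h j k = l1n (z j - z k) powr (-a)" for j k
    have hs: "h j k = h k j" for j k unfolding h_def using l1n_minus[of "z j - z k"] by simp
    have ci: "fker a p z \<le> (\<Prod>j<p. d j) powr c + (\<Sum>i<p. (d i * (\<Prod>j\<in>{..<p}-{i}. h i j)) powr c)"
    proof -
      have "fker a p z = (\<Prod>j<p. d j) * (\<Prod>j<p. \<Prod>k\<in>{j<..<p}. h j k)"
        unfolding fker_def d_def h_def ..
      moreover have "(\<Prod>j<p. d j) * (\<Prod>j<p. \<Prod>k\<in>{j<..<p}. h j k) \<le> (\<Prod>j<p. d j) powr c + (\<Sum>i<p. (d i * (\<Prod>j\<in>{..<p}-{i}. h i j)) powr c)"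
        unfolding c_def by (rule core_ineq[of d h, OF _ _ hs]) (auto simp: d_def h_def)
      ultimately show ?thesis by simp
    qed
    have pc: "(x powr (-a)) powr c = x powr (-b)" for x unfolding b_def powr_powr by simp
    have r1: "ennreal ((\<Prod>j<p. d j) powr c) = TO z"
    proof -
      have "(\<Prod>j<p. d j) powr c = (\<Prod>j<p. l1n (z j) powr (-b))"
        unfolding prod_powr_distrib d_def pc ..
      moreover have "TO z = (\<Prod>j<p. ennreal (l1n (z j) powr (-b)))"
        unfolding TO_def e_def by (intro prod.cong refl) (simp add: zB)
      ultimately show ?thesis by (simp only: prod_ennreal powr_ge_zero)
    qed
    have r2: "ennreal ((d i * (\<Prod>j\<in>{..<p}-{i}. h i j)) powr c) = T i z" if "i < p" for i
    proof -
      have "(d i * (\<Prod>j\<in>{..<p}-{i}. h i j)) powr c = l1n (z i) powr (-b) * (\<Prod>j\<in>{..<p}-{i}. l1n (z i - z j) powr (-b))"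
        unfolding powr_mult prod_powr_distrib d_def h_def pc ..
      moreover have "T i z = ennreal (l1n (z i) powr (-b)) * (\<Prod>j\<in>{..<p}-{i}. ennreal (l1n (z i - z j) powr (-b)))"
        unfolding T_def e_def G_def using that by (intro arg_cong2[where f="(*)"] prod.cong refl) (simp_all add: zB)
      ultimately show ?thesis by (simp only: prod_ennreal powr_ge_zero ennreal_mult' prod_nonneg)
    qed
    have "ennreal (fker a p z) \<le> ennreal ((\<Prod>j<p. d j) powr c + (\<Sum>i<p. (d i * (\<Prod>j\<in>{..<p}-{i}. h i j)) powr c))"
      using ci by (rule ennreal_leI)
    also have "\<dots> = ennreal ((\<Prod>j<p. d j) powr c) + (\<Sum>i<p. ennreal ((d i * (\<Prod>j\<in>{..<p}-{i}. h i j)) powr c))"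
    proof -
      have "ennreal ((\<Prod>j<p. d j) powr c + (\<Sum>i<p. (d i * (\<Prod>j\<in>{..<p}-{i}. h i j)) powr c))
          = ennreal ((\<Prod>j<p. d j) powr c) + ennreal (\<Sum>i<p. (d i * (\<Prod>j\<in>{..<p}-{i}. h i j)) powr c)"
        by (rule ennreal_plus) (simp_all add: sum_nonneg)
      also have "ennreal (\<Sum>i<p. (d i * (\<Prod>j\<in>{..<p}-{i}. h i j)) powr c) = (\<Sum>i<p. ennreal ((d i * (\<Prod>j\<in>{..<p}-{i}. h i j)) powr c))"
        by (rule sum_ennreal[symmetric]) simp
      finally show ?thesis .
    qed
    also have "\<dots> = TO z + (\<Sum>i<p. T i z)"
      using r1 r2 by simp
    finally show ?thesis using True by simp
  qed
  let ?PM = "PiM {..<p} (\<lambda>_. lborel :: (real \<times> real) measure)"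
  have TOi: "(\<integral>\<^sup>+ z. TO z \<partial>?PM) < \<infinity>"
  proof -
    have "(\<integral>\<^sup>+ z. TO z \<partial>?PM) = (\<Prod>j<p. E)"
      unfolding TO_def E_def by (rule ps.product_nn_integral_prod) auto
    also have "\<dots> = E ^ p" by simp
    finally show ?thesis using E by (simp add: power_less_top_ennreal)
  qed
  have Ti: "(\<integral>\<^sup>+ z. T i z \<partial>?PM) < \<infinity>" if ip: "i < p" for i
  proof -
    define J where "J = {..<p} - {i}"
    have IJ: "{..<p} = insert i J" "i \<notin> J" "finite J" unfolding J_def using ip by auto
    have Tm': "T i \<in> borel_measurable (PiM (insert i J) (\<lambda>_. lborel :: (real \<times> real) measure))"
      using Tm[OF ip] unfolding IJ(1) .
    have "(\<integral>\<^sup>+ z. T i z \<partial>?PM) = (\<integral>\<^sup>+ z. T i z \<partial>PiM (insert i J) (\<lambda>_. lborel))"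
      unfolding IJ(1) ..
    also have "\<dots> = (\<integral>\<^sup>+ y. (\<integral>\<^sup>+ x. T i (x(i := y)) \<partial>PiM J (\<lambda>_. lborel)) \<partial>lborel)"
      by (rule ps.product_nn_integral_insert_rev[OF IJ(3) IJ(2) Tm'])
    also have "\<dots> \<le> (\<integral>\<^sup>+ y. e y * K ^ card J \<partial>lborel)"
    proof (rule nn_integral_mono)
      fix y :: "real \<times> real"
      have Gy: "G y \<in> borel_measurable borel" unfolding G_def by measurable
      have "(\<integral>\<^sup>+ x. T i (x(i := y)) \<partial>PiM J (\<lambda>_. lborel)) = (\<integral>\<^sup>+ x. e y * (\<Prod>j\<in>J. G y (x j)) \<partial>PiM J (\<lambda>_. lborel))"
        unfolding T_def J_def[symmetric] using IJ(2)
        by (intro nn_integral_cong arg_cong2[where f="(*)"] prod.cong refl) auto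
      also have "\<dots> = e y * (\<integral>\<^sup>+ x. (\<Prod>j\<in>J. G y (x j)) \<partial>PiM J (\<lambda>_. lborel))"
      proof (rule nn_integral_cmult)
        show "(\<lambda>x. \<Prod>j\<in>J. G y (x j)) \<in> borel_measurable (PiM J (\<lambda>_. lborel :: (real \<times> real) measure))"
        proof (rule borel_measurable_prod_ennreal[where f="\<lambda>j x. G y (x j)"])
          fix j assume jj: "j \<in> J"
          show "(\<lambda>x. G y (x j)) \<in> borel_measurable (PiM J (\<lambda>_. lborel))"
          proof (rule measurable_compose[of "\<lambda>x. x j" _ "borel"])
            show "(\<lambda>x. x j) \<in> PiM J (\<lambda>_. lborel) \<rightarrow>\<^sub>M borel" using jj by measurable
            show "G y \<in> borel_measurable borel" unfolding G_def by measurable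
          qed
        qed
      qed
      also have "(\<integral>\<^sup>+ x. (\<Prod>j\<in>J. G y (x j)) \<partial>PiM J (\<lambda>_. lborel)) = (\<Prod>j\<in>J. (\<integral>\<^sup>+ u. G y u \<partial>lborel))"
        by (rule ps.product_nn_integral_prod[where f="\<lambda>j. G y"]) (use IJ(3) Gy in auto)
      also have "e y * \<dots> \<le> e y * K ^ card J"
      proof (cases "y \<in> B")
        case True
        have "(\<Prod>j\<in>J. (\<integral>\<^sup>+ u. G y u \<partial>lborel)) \<le> (\<Prod>j\<in>J. K)"
        proof (rule prod_mono_ennreal)
          fix j assume "j \<in> J"
          have "(\<integral>\<^sup>+ u. G y u \<partial>lborel) \<le> K"
            unfolding G_def K_def B_def by (rule int_translate) (use True in \<open>simp add: B_def\<close>)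
          thus "(\<integral>\<^sup>+ u. G y u \<partial>lborel) \<le> K" .
        qed
        thus ?thesis by (simp add: mult_left_mono)
      next
        case False
        thus ?thesis by (simp add: e_def)
      qed
      finally show "(\<integral>\<^sup>+ x. T i (x(i := y)) \<partial>PiM J (\<lambda>_. lborel)) \<le> e y * K ^ card J" .
    qed
    also have "\<dots> = E * K ^ card J"
      unfolding E_def by (rule nn_integral_multc) simp
    also have "\<dots> < \<infinity>" using E K by (simp add: ennreal_mult_less_top power_less_top_ennreal)
    finally show ?thesis .
  qed
  have "(\<integral>\<^sup>+ z \<in> (PiE {..<p} (\<lambda>_. l1ball r)). ennreal (fker a p z) \<partial>?PM)
      \<le> (\<integral>\<^sup>+ z. TO z + (\<Sum>i<p. T i z) \<partial>?PM)"
    by (rule nn_integral_mono) (rule pw)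
  also have "\<dots> = (\<integral>\<^sup>+ z. TO z \<partial>?PM) + (\<integral>\<^sup>+ z. (\<Sum>i<p. T i z) \<partial>?PM)"
    by (rule nn_integral_add) (use Tm in auto)
  also have "(\<integral>\<^sup>+ z. (\<Sum>i<p. T i z) \<partial>?PM) = (\<Sum>i<p. \<integral>\<^sup>+ z. T i z \<partial>?PM)"
    by (rule nn_integral_sum) (use Tm in auto)
  also have "(\<integral>\<^sup>+ z. TO z \<partial>?PM) + (\<Sum>i<p. \<integral>\<^sup>+ z. T i z \<partial>?PM) < \<infinity>"
    using TOi Ti by simp
  finally show ?thesis .
qed

end
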